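(* Let $S_m$ be the model sphere of revolution and let $f\colon(-1,1)\to\mathbb{R}$ be the rotation function of the first return map to the Birkhoff annulus $A$ of the minimal parallel, as described in the context. Then $f$ is strictly decreasing on $(-1,1)$.
   Context: A sphere of revolution $S\subset\mathbb{R}^3$ is a surface diffeomorphic to $S^2$ invariant under rotations about the $z$-axis. Its intersection with the $(x,z)$-half-plane is parametrized by arclength by a closed curve $\sigma(s)=(r(s),z(s))$, $s\in\mathbb{R}/M\mathbb{Z}$ ($M$ its length), positively oriented, with $\sigma(0)$ the lower intersection point with the $z$-axis. Coordinates $\Phi(s,\theta)=(r(s)\cos\theta,r(s)\sin\theta,z(s))$, $s\in(0,M/2)$, $\theta\in\mathbb{R}/2\pi\mathbb{Z}$; the induced metric is $ds^2+r(s)^2d\theta^2$. The parallel $P_{s_0}$ is the curve $\theta\mapsto\Phi(s_0,\theta)$. The model sphere $S_m$ is a sphere of revolution with: $M>2\pi$; $r(s)=\sin s$ for $s\in[0,\pi/2]$; $\sigma$ symmetric with respect to the $x$-axis (so $S_m$ is symmetric under $z\mapsto -z$); and $r|_{(0,M/2)}$ has exactly three critical points: maxima at $s=\pi/2$ and $s=M/2-\pi/2$ with value $1$, and a minimum at $s=M/4$ with value $r_{min}\in(0,1)$. Unit tangent vectors over $\Phi(s,\theta)$ are described by the angle $\beta\in\mathbb{R}/2\pi\mathbb{Z}$ from $\partial_\theta$ to the vector; in coordinates $(s,\theta,\beta)$ the geodesic flow is $s'=\sin\beta$, $\beta'=\frac{r'(s)}{r(s)}\cos\beta$, $\theta'=\frac{\cos\beta}{r(s)}$.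 The Birkhoff annulus of $P_{M/4}$ is $A=\{(\Phi(M/4,\theta),\beta):\theta\in\mathbb{R}/2\pi\mathbb{Z},\ \beta\in(0,\pi)\}$, parametrized by $(x,\eta)$ with $x\in\mathbb{R}/L\mathbb{Z}$ the arclength along $P_{M/4}$ ($L=2\pi r_{min}$) and $\eta=-\cos\beta\in(-1,1)$. Every geodesic flow line through $A$ is transverse to $A$ and returns to $A$; by invariance of the Clairaut integral $r(s)\cos\beta$ and rotational symmetry, the first return map has the form $\rho(x,\eta)=(x+f(\eta)\bmod L,\ \eta)$, where $f\colon(-1,1)\to\mathbb{R}$ is the continuous function with $f(0)=0$ (the points $(x,0)$ lie on meridians, which are closed geodesics). *)

theory Defs
  imports "HOL-Analysis.Analysis"
begin

definition smooth_fun :: "(real \<Rightarrow> real) \<Rightarrow> bool" where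
  "smooth_fun g \<longleftrightarrow> (\<forall>k::nat. \<forall>x. ((deriv ^^ k) g) differentiable (at x))"

text \<open>Profile curve sigma(s) = (r s, z s) of a sphere of revolution: a smooth simple closed
  curve of length M in the (x,z)-plane parametrized by arclength, symmetric under x \<mapsto> -x
  (rotation invariance), positively oriented, sigma(0) the lower point on the z-axis and
  r > 0 on (0, M/2).\<close>
definition sphere_of_revolution :: "(real \<Rightarrow> real) \<Rightarrow> (real \<Rightarrow> real) \<Rightarrow> real \<Rightarrow> bool" where
  "sphere_of_revolution r z M \<longleftrightarrow>
     M > 0 \<and> smooth_fun r \<and> smooth_fun z \<and>
     (\<forall>s. r (s + M) = r s \<and> z (s + M) = z s) \<and>
     inj_on (\<lambda>s. (r s, z s)) {0..<M} \<and>
     (\<forall>s. (deriv r s)\<^sup>2 + (deriv z s)\<^sup>2 = 1) \<and>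
     (\<forall>s. r (- s) = - r s \<and> z (- s) = z s) \<and>
     r 0 = 0 \<and> (\<forall>s\<in>{0<..<M/2}. r s > 0) \<and> z 0 < z (M/2)"

definition model_sphere :: "(real \<Rightarrow> real) \<Rightarrow> (real \<Rightarrow> real) \<Rightarrow> real \<Rightarrow> real \<Rightarrow> bool" where
  "model_sphere r z M rmin \<longleftrightarrow>
     sphere_of_revolution r z M \<and> M > 2 * pi \<and>
     (\<forall>s\<in>{0..pi/2}. r s = sin s) \<and>
     (\<forall>s. r (M/2 - s) = r s \<and> z (M/2 - s) = - z s) \<and>
     {s\<in>{0<..<M/2}. deriv r s = 0} = {pi/2, M/4, M/2 - pi/2} \<and>
     r (pi/2) = 1 \<and> r (M/2 - pi/2) = 1 \<and>
     r (M/4) = rmin \<and> 0 < rmin \<and> rmin < 1"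

definition geod_traj :: "(real \<Rightarrow> real) \<Rightarrow> real \<Rightarrow> (real \<Rightarrow> real) \<Rightarrow> (real \<Rightarrow> real) \<Rightarrow> (real \<Rightarrow> real) \<Rightarrow> bool" where
  "geod_traj r T s th b \<longleftrightarrow>
     (\<forall>t\<in>{0..T}.
        (s has_real_derivative sin (b t)) (at t within {0..T}) \<and>
        (b has_real_derivative (deriv r (s t) / r (s t) * cos (b t))) (at t within {0..T}) \<and>
        (th has_real_derivative (cos (b t) / r (s t))) (at t within {0..T}))"

text \<open>f is the rotation function of the first return map to the Birkhoff annulus of the
  parallel P_{M/4}: continuous on (-1,1), f 0 = 0, and for every point (x, eta) of the annulus,
  x = rmin * theta, eta = - cos beta, beta in (0,pi), the first return of the geodesic flow to the
  annulus lands at x + f eta mod L, L = 2 pi rmin.\<close>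
definition rotation_function :: "(real \<Rightarrow> real) \<Rightarrow> real \<Rightarrow> real \<Rightarrow> (real \<Rightarrow> real) \<Rightarrow> bool" where
  "rotation_function r M rmin f \<longleftrightarrow>
     continuous_on {-1<..<1} f \<and> f 0 = 0 \<and>
     (\<forall>\<eta> T s th b. \<eta> \<in> {-1<..<1} \<and> T > 0 \<and> geod_traj r T s th b \<and>
        s 0 = M/4 \<and> sin (b 0) > 0 \<and> - cos (b 0) = \<eta> \<and>
        (\<forall>t\<in>{0..T}. 0 < s t \<and> s t < M/2) \<and>
        s T = M/4 \<and> sin (b T) > 0 \<and>
        (\<forall>t\<in>{0<..<T}. \<not> (s t = M/4 \<and> sin (b t) > 0))
        \<longrightarrow> (\<exists>k::int. f \<eta> = rmin * (th T - th 0) + of_int k * (2 * pi * rmin)))"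

end

theory Submission
  imports Defs
begin


locale ms =
  fixes r z :: "real \<Rightarrow> real" and M rmin :: real
  assumes ms: "model_sphere r z M rmin"
begin

lemma sor: "sphere_of_revolution r z M" using ms unfolding model_sphere_def by blast

lemma M_gt: "M > 2 * pi" using ms unfolding model_sphere_def by blast

lemma rmin: "0 < rmin" "rmin < 1" "r (M/4) = rmin" using ms unfolding model_sphere_def by auto

lemma r_deriv: "(r has_real_derivative deriv r x) (at x)"
proof -
  have "smooth_fun r" using sor unfolding sphere_of_revolution_def by blast
  then have "r differentiable (at x)" unfolding smooth_fun_def by (metis funpow_0)
  then show ?thesis by (simp add: DERIV_deriv_iff_real_differentiable)
qed

lemma dr_cont: "isCont (deriv r) x"
proof -
  have "smooth_fun r" using sor unfolding sphere_of_revolution_def by blast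
  then have "((deriv ^^ Suc 0) r) differentiable (at x)" unfolding smooth_fun_def by blast
  then have "(deriv r) differentiable (at x)" by simp
  then show ?thesis by (simp add: differentiable_imp_continuous_within)
qed

lemma r_isCont: "isCont r x" using r_deriv DERIV_isCont by blast

lemma r_cont: "continuous_on S r" by (simp add: continuous_at_imp_continuous_on r_isCont)

lemma r_odd: "r (- x) = - r x" using sor unfolding sphere_of_revolution_def by blast

lemma r_sin: assumes "x \<in> {-pi/2..pi/2}" shows "r x = sin x"
proof (cases "x \<ge> 0")
  case True
  then show ?thesis using ms assms unfolding model_sphere_def by auto
next
  case False
  then have "r (-x) = sin (-x)" using ms assms unfolding model_sphere_def by auto
  then show ?thesis using r_odd by simp
qed

lemma crit: "{s\<in>{0<..<M/2}. deriv r s = 0} = {pi/2, M/4, M/2 - pi/2}"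
  using ms unfolding model_sphere_def by blast

lemma dr_pi2: "deriv r (pi/2) = 0"
proof -
  have "pi/2 \<in> {s\<in>{0<..<M/2}. deriv r s = 0}" unfolding crit by simp
  then show ?thesis by simp
qed

lemma dr_cos: assumes "x \<in> {0<..pi/2}" shows "deriv r x = cos x"
proof (cases "x = pi/2")
  case True then show ?thesis using dr_pi2 by (metis cos_pi_half)
next
  case False
  then have x: "x \<in> {-pi/2<..<pi/2}" using assms by auto
  have "(r has_real_derivative cos x) (at x)"
    by (rule has_field_derivative_transform_within_open[of sin _ _ "{-pi/2<..<pi/2}"])
       (use x in \<open>auto intro!: derivative_eq_intros simp: r_sin\<close>)
  then show ?thesis using r_deriv DERIV_unique by blast
qed

lemma r_sym: "r (M/2 - x) = r x" using ms unfolding model_sphere_def by blast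

lemma dr_sym: "deriv r (M/2 - x) = - deriv r x"
proof -
  have "((\<lambda>x. r (M/2 - x)) has_real_derivative deriv r (M/2 - x) * (-1)) (at x)"
    by (rule DERIV_chain2[OF r_deriv]) (auto intro!: derivative_eq_intros)
  then have "(r has_real_derivative - deriv r (M/2 - x)) (at x)" by (simp add: r_sym)
  then show ?thesis using r_deriv DERIV_unique by fastforce
qed

lemma r_top: assumes "x \<in> {M/2-pi/2..<M/2}" shows "r x = sin (M/2 - x)"
  using r_sym[of "M/2 - x"] r_sin[of "M/2 - x"] assms by auto

lemma dr_top: assumes "x \<in> {M/2-pi/2..<M/2}" shows "deriv r x = - cos (M/2 - x)"
  using dr_sym[of "M/2 - x"] dr_cos[of "M/2 - x"] assms by auto

lemma r_pos: assumes "x \<in> {0<..<M/2}" shows "r x > 0"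
  using sor assms unfolding sphere_of_revolution_def by blast

lemma r_ge_rmin_half: assumes "x \<in> {pi/2..M/4}" shows "rmin \<le> r x"
proof -
  have "\<exists>x0\<in>{pi/2..M/4}. \<forall>y\<in>{pi/2..M/4}. r x0 \<le> r y"
    by (rule continuous_attains_inf) (use M_gt in \<open>auto simp: r_cont\<close>)
  then obtain x0 where x0: "x0 \<in> {pi/2..M/4}" and mn: "\<forall>y\<in>{pi/2..M/4}. r x0 \<le> r y" by blast
  show ?thesis
  proof (rule ccontr)
    assume "\<not> rmin \<le> r x"
    then have lt: "r x0 < rmin" using mn assms by force
    have r1: "r (pi/2) = 1" using r_sin[of "pi/2"] by simp
    have ne1: "x0 \<noteq> pi/2" using lt r1 rmin(2) by (metis less_asym order.strict_trans)
    have ne2: "x0 \<noteq> M/4" using lt rmin by auto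
    have x0i: "pi/2 < x0" "x0 < M/4" using x0 ne1 ne2 by auto
    define d where "d = min (x0 - pi/2) (M/4 - x0)"
    have "deriv r x0 = 0"
      by (rule DERIV_local_min[OF r_deriv, of d]) (use x0i in \<open>auto simp: d_def abs_less_iff intro!: mn[rule_format]\<close>)
    moreover have "0 < x0" "x0 < M/2" using x0i M_gt pi_gt_zero by linarith+
    ultimately have "x0 \<in> {s\<in>{0<..<M/2}. deriv r s = 0}" by auto
    then have "x0 \<in> {pi/2, M/4, M/2 - pi/2}" unfolding crit .
    then show False using x0i M_gt by auto
  qed
qed

lemma r_ge_rmin: assumes "x \<in> {pi/2..M/2 - pi/2}" shows "rmin \<le> r x"
proof (cases "x \<le> M/4")
  case True then show ?thesis using assms r_ge_rmin_half by auto
next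
  case False
  then have "M/2 - x \<in> {pi/2..M/4}" using assms by auto
  then show ?thesis using r_ge_rmin_half r_sym by fastforce
qed

end


definition traj_on :: "(real\<Rightarrow>real) \<Rightarrow> real \<Rightarrow> real \<Rightarrow> (real\<Rightarrow>real) \<Rightarrow> (real\<Rightarrow>real) \<Rightarrow> (real\<Rightarrow>real) \<Rightarrow> bool" where
 "traj_on r a e s th b \<longleftrightarrow> (\<forall>t\<in>{a..e}.
        (s has_real_derivative sin (b t)) (at t within {a..e}) \<and>
        (b has_real_derivative (deriv r (s t) / r (s t) * cos (b t))) (at t within {a..e}) \<and>
        (th has_real_derivative (cos (b t) / r (s t))) (at t within {a..e}))"

definition traj_at :: "(real\<Rightarrow>real) \<Rightarrow> real \<Rightarrow> real \<Rightarrow> (real\<Rightarrow>real) \<Rightarrow> (real\<Rightarrow>real) \<Rightarrow> (real\<Rightarrow>real) \<Rightarrow> bool" where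
 "traj_at r a e s th b \<longleftrightarrow> (\<forall>t\<in>{a..e}.
        (s has_real_derivative sin (b t)) (at t) \<and>
        (b has_real_derivative (deriv r (s t) / r (s t) * cos (b t))) (at t) \<and>
        (th has_real_derivative (cos (b t) / r (s t))) (at t))"

lemma traj_at_on: "traj_at r a e s th b \<Longrightarrow> traj_on r a e s th b"
  unfolding traj_at_def traj_on_def by (auto intro: has_field_derivative_at_within)

lemma geod_traj_iff: "geod_traj r T s th b \<longleftrightarrow> traj_on r 0 T s th b"
  unfolding geod_traj_def traj_on_def by simp

lemma deriv_trivial:
  fixes f :: "real \<Rightarrow> real"
  assumes "t \<notin> closure S"
  shows "(f has_real_derivative D) (at t within S)"
  unfolding has_field_derivative_iff
  using not_in_closure_trivial_limitI[OF assms] by (rule Lim_trivial_limit)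

lemma glue1:
  fixes f1 f2 :: "real \<Rightarrow> real"
  assumes am: "a \<le> m" and me: "m \<le> e" and t: "t \<in> {a..e}"
  and d1: "\<forall>t\<in>{a..m}. (f1 has_real_derivative D1 t) (at t within {a..m})"
  and d2: "\<forall>t\<in>{m..e}. (f2 has_real_derivative D2 t) (at t within {m..e})"
  and fm: "f1 m = f2 m" and Dm: "D1 m = D2 m"
  shows "((\<lambda>t. if t \<le> m then f1 t else f2 t) has_real_derivative (if t \<le> m then D1 t else D2 t)) (at t within {a..e})"
proof -
  define g where "g = (\<lambda>t. if t \<le> m then f1 t else f2 t)"
  define D where "D = (if t \<le> m then D1 t else D2 t)"
  have A: "(g has_real_derivative D) (at t within {a..m})"
  proof (cases "t \<le> m")
    case True
    then have tt: "t \<in> {a..m}" using t by auto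
    have "(g has_real_derivative D1 t) (at t within {a..m})"
      by (rule has_field_derivative_transform_within[OF d1[rule_format, OF tt], of 1])
         (use True tt in \<open>auto simp: g_def\<close>)
    then show ?thesis using True by (simp add: D_def)
  next
    case False
    then show ?thesis by (intro deriv_trivial) auto
  qed
  have B: "(g has_real_derivative D) (at t within {m..e})"
  proof (cases "m \<le> t")
    case True
    then have tt: "t \<in> {m..e}" using t by auto
    have "(g has_real_derivative D2 t) (at t within {m..e})"
      by (rule has_field_derivative_transform_within[OF d2[rule_format, OF tt], of 1])
         (use True tt fm in \<open>auto simp: g_def\<close>)
    then show ?thesis using True Dm by (auto simp: D_def)
  next
    case False
    then show ?thesis by (intro deriv_trivial) auto
  qed
  have U: "{a..e} = {a..m} \<union> {m..e}" using am me by auto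
  show ?thesis
    using A B unfolding g_def[symmetric] D_def[symmetric] U has_field_derivative_iff Lim_within_Un
    by simp
qed

lemma glue:
  assumes am: "a \<le> m" and me: "m \<le> e"
  and T1: "traj_on r a m s1 th1 b1" and T2: "traj_on r m e s2 th2 b2"
  and sm: "s1 m = s2 m" and tm: "th1 m = th2 m" and bm: "b1 m = b2 m"
  shows "traj_on r a e (\<lambda>t. if t \<le> m then s1 t else s2 t) (\<lambda>t. if t \<le> m then th1 t else th2 t)
           (\<lambda>t. if t \<le> m then b1 t else b2 t)"
  unfolding traj_on_def
proof (intro ballI conjI)
  fix t assume t: "t \<in> {a..e}"
  show "((\<lambda>t. if t \<le> m then s1 t else s2 t) has_real_derivative sin (if t \<le> m then b1 t else b2 t)) (at t within {a..e})"
    using glue1[OF am me t, of s1 "\<lambda>t. sin (b1 t)" s2 "\<lambda>t. sin (b2 t)"] T1 T2 sm bm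
    unfolding traj_on_def by (auto simp: if_distrib)
  show "((\<lambda>t. if t \<le> m then b1 t else b2 t) has_real_derivative
          deriv r (if t \<le> m then s1 t else s2 t) / r (if t \<le> m then s1 t else s2 t) * cos (if t \<le> m then b1 t else b2 t)) (at t within {a..e})"
    using glue1[OF am me t, of b1 "\<lambda>t. deriv r (s1 t) / r (s1 t) * cos (b1 t)" b2 "\<lambda>t. deriv r (s2 t) / r (s2 t) * cos (b2 t)"] T1 T2 sm bm
    unfolding traj_on_def by (auto simp: if_distrib)
  show "((\<lambda>t. if t \<le> m then th1 t else th2 t) has_real_derivative
          cos (if t \<le> m then b1 t else b2 t) / r (if t \<le> m then s1 t else s2 t)) (at t within {a..e})"
    using glue1[OF am me t, of th1 "\<lambda>t. cos (b1 t) / r (s1 t)" th2 "\<lambda>t. cos (b2 t) / r (s2 t)"] T1 T2 sm bm tm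
    unfolding traj_on_def by (auto simp: if_distrib)
qed

lemma flip:
  assumes "traj_on r a e s th b"
  shows "traj_on r a e s (\<lambda>t. - th t) (\<lambda>t. pi - b t)"
  unfolding traj_on_def
proof (intro ballI conjI)
  fix t assume t: "t \<in> {a..e}"
  have d: "(s has_real_derivative sin (b t)) (at t within {a..e})"
     "(b has_real_derivative (deriv r (s t) / r (s t) * cos (b t))) (at t within {a..e})"
     "(th has_real_derivative (cos (b t) / r (s t))) (at t within {a..e})"
    using assms t unfolding traj_on_def by auto
  show "(s has_real_derivative sin (pi - b t)) (at t within {a..e})" using d(1) by simp
  show "((\<lambda>t. pi - b t) has_real_derivative deriv r (s t) / r (s t) * cos (pi - b t)) (at t within {a..e})"
    using d(2) by (auto intro!: derivative_eq_intros)
  show "((\<lambda>t. - th t) has_real_derivative cos (pi - b t) / r (s t)) (at t within {a..e})"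
    using d(3) by (auto intro!: derivative_eq_intros)
qed


definition hfun :: "(real \<Rightarrow> real) \<Rightarrow> real \<Rightarrow> real \<Rightarrow> real" where
  "hfun r c x = c / ((r x)\<^sup>2 * sqrt (1 - (c / r x)\<^sup>2))"

locale neck = ms +
  fixes c :: real
  assumes c: "0 < c" "c < rmin"
begin

definition "d1 = (arcsin c + pi/2) / 2"
definition "d2 = M/2 - d1"
definition "w x = sqrt (1 - (c / r x)\<^sup>2)"
definition "P x = integral {d1..x} (\<lambda>y. 1 / w y)"
definition "Th x = integral {d1..x} (hfun r c)"
definition "Pinv = the_inv_into {d1..d2} P"

lemma c1: "c < 1" using c rmin by linarith

lemma d1: "arcsin c < d1" "d1 < pi/2" "0 < d1" "c < sin d1" "d1 < d2" "pi/2 < d2 - (M/2 - pi/2) + pi/2"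
proof -
  have as: "- (pi/2) < arcsin c \<and> arcsin c < pi/2" using arcsin_lt_bounded c c1 by auto
  have as0: "0 < arcsin c" using c c1 arcsin_less_arcsin[of 0 c] by auto
  show 1: "arcsin c < d1" "d1 < pi/2" using as by (auto simp: d1_def)
  show "0 < d1" using as0 1 by linarith
  have "sin (arcsin c) < sin d1" using 1 as by (subst sin_mono_less_eq) auto
  then show "c < sin d1" using c c1 by simp
  show "d1 < d2" using M_gt 1 as0 by (simp add: d2_def)
  show "pi/2 < d2 - (M/2 - pi/2) + pi/2" using 1 by (simp add: d2_def)
qed

lemma d2_gt: "M/2 - pi/2 < d2" "d2 < M/2" using d1 by (auto simp: d2_def)

lemma rc: assumes "x \<in> {d1..d2}" shows "c < r x"
proof -
  consider "x \<le> pi/2" | "pi/2 \<le> x" "x \<le> M/2 - pi/2" | "M/2 - pi/2 \<le> x" by linarith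
  then show ?thesis
  proof cases
    case 1
    then have "r x = sin x" using assms d1 by (intro r_sin) auto
    moreover have "sin d1 \<le> sin x" using 1 assms d1 by (intro sin_monotone_2pi_le) auto
    ultimately show ?thesis using d1 by linarith
  next
    case 2 then show ?thesis using r_ge_rmin c by force
  next
    case 3
    then have "r x = sin (M/2 - x)" using assms d2_gt by (intro r_top) auto
    moreover have "sin d1 \<le> sin (M/2 - x)" using 3 assms d1 by (intro sin_monotone_2pi_le) (auto simp: d2_def)
    ultimately show ?thesis using d1 by linarith
  qed
qed

lemma rpos: "x \<in> {d1..d2} \<Longrightarrow> 0 < r x" using rc[of x] c by linarith

lemma cr: assumes "x \<in> {d1..d2}" shows "0 < c / r x" "c / r x < 1"
  using rc[OF assms] rpos[OF assms] c by (auto simp: field_simps)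

lemma w_pos: assumes "x \<in> {d1..d2}" shows "0 < w x"
proof -
  have "(c / r x)\<^sup>2 < 1" using cr[OF assms] by (simp add: power_less_one_iff abs_less_iff)
  then show ?thesis by (simp add: w_def)
qed

lemma cont_w: "continuous_on {d1..d2} w"
  unfolding w_def by (intro continuous_intros r_cont) (use rpos in force)

lemma cont_inv_w: "continuous_on {d1..d2} (\<lambda>y. 1 / w y)"
  by (intro continuous_intros cont_w) (use w_pos in force)

lemma cont_h: "continuous_on {d1..d2} (hfun r c)"
proof -
  have "continuous_on {d1..d2} (\<lambda>y. c / ((r y)\<^sup>2 * w y))"
    by (intro continuous_intros cont_w r_cont) (use w_pos rpos in force)
  then show ?thesis by (simp add: hfun_def w_def[abs_def])
qed

lemma P_eq: "P = (\<lambda>x. integral {d1..x} (\<lambda>y. 1 / w y))" by (rule ext) (simp add: P_def)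
lemma Th_eq: "Th = (\<lambda>x. integral {d1..x} (hfun r c))" by (rule ext) (simp add: Th_def)

lemma at_int: assumes "x \<in> {d1<..<d2}" shows "at x within {d1..d2} = at x"
  by (rule at_within_interior) (use assms in simp)

lemma P_deriv: assumes "x \<in> {d1<..<d2}" shows "(P has_real_derivative 1 / w x) (at x)"
proof -
  have x: "x \<in> {d1..d2}" using assms by auto
  have "(P has_real_derivative 1 / w x) (at x within {d1..d2})"
    unfolding P_eq by (rule integral_has_real_derivative[OF cont_inv_w x])
  then show ?thesis unfolding at_int[OF assms] .
qed

lemma Th_deriv: assumes "x \<in> {d1<..<d2}" shows "(Th has_real_derivative hfun r c x) (at x)"
proof -
  have x: "x \<in> {d1..d2}" using assms by auto
  have "(Th has_real_derivative hfun r c x) (at x within {d1..d2})"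
    unfolding Th_eq by (rule integral_has_real_derivative[OF cont_h x])
  then show ?thesis unfolding at_int[OF assms] .
qed

lemma P_cont: "continuous_on {d1..d2} P"
  unfolding P_eq by (rule indefinite_integral_continuous_1) (rule integrable_continuous_real[OF cont_inv_w])

lemma P_strict: assumes "x \<in> {d1..d2}" "y \<in> {d1..d2}" "x < y" shows "P x < P y"
proof (rule DERIV_pos_imp_increasing_open[OF assms(3)])
  fix t assume "x < t" "t < y"
  then have t: "t \<in> {d1<..<d2}" using assms by auto
  then show "\<exists>y. (P has_real_derivative y) (at t) \<and> 0 < y"
    using P_deriv w_pos by (intro exI[of _ "1 / w t"]) auto
next
  show "continuous_on {x..y} P" using P_cont by (rule continuous_on_subset) (use assms in auto)
qed

lemma P_mono: "x \<in> {d1..d2} \<Longrightarrow> y \<in> {d1..d2} \<Longrightarrow> x \<le> y \<Longrightarrow> P x \<le> P y"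
  using P_strict[of x y] by (cases "x = y") auto

lemma P_inj: "inj_on P {d1..d2}"
proof (rule inj_onI)
  fix x y assume "x \<in> {d1..d2}" "y \<in> {d1..d2}" "P x = P y"
  then show "x = y" using P_strict[of x y] P_strict[of y x] by (cases x y rule: linorder_cases) auto
qed

lemma P_d1: "P d1 = 0" by (simp add: P_def)

lemma P_img: "P ` {d1..d2} = {0..P d2}"
proof
  show "P ` {d1..d2} \<subseteq> {0..P d2}"
  proof
    fix y assume "y \<in> P ` {d1..d2}"
    then obtain x where x: "x \<in> {d1..d2}" "y = P x" by blast
    have "P d1 \<le> P x" "P x \<le> P d2" using x d1 by (intro P_mono; simp)+
    then show "y \<in> {0..P d2}" using x P_d1 by simp
  qed
  show "{0..P d2} \<subseteq> P ` {d1..d2}"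
  proof
    fix y assume y: "y \<in> {0..P d2}"
    have le: "d1 \<le> d2" using d1(5) by linarith
    have y1: "P d1 \<le> y" "y \<le> P d2" using y P_d1 by auto
    obtain x where "d1 \<le> x" "x \<le> d2" "P x = y"
      using IVT'[of P d1 y d2, OF y1 le P_cont] by blast
    then show "y \<in> P ` {d1..d2}" by auto
  qed
qed

lemma Pinv_P: "x \<in> {d1..d2} \<Longrightarrow> Pinv (P x) = x"
  unfolding Pinv_def by (rule the_inv_into_f_f[OF P_inj])

lemma P_Pinv: "y \<in> {0..P d2} \<Longrightarrow> P (Pinv y) = y"
  unfolding Pinv_def by (rule f_the_inv_into_f[OF P_inj]) (simp add: P_img)

lemma Pinv_in: "y \<in> {0..P d2} \<Longrightarrow> Pinv y \<in> {d1..d2}"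
  unfolding Pinv_def by (rule the_inv_into_into[OF P_inj]) (auto simp: P_img)

lemma Pinv_cont: "continuous_on {0..P d2} Pinv"
  using continuous_on_inv_into[OF P_cont _ P_inj] unfolding Pinv_def P_img by simp

lemma Pinv_in_open: assumes "y \<in> {0<..<P d2}" shows "Pinv y \<in> {d1<..<d2}"
proof -
  have y: "y \<in> {0..P d2}" using assms by auto
  have "Pinv y \<noteq> d1" using P_Pinv[OF y] P_d1 assms by force
  moreover have "Pinv y \<noteq> d2" using P_Pinv[OF y] assms by force
  ultimately show ?thesis using Pinv_in[OF y] by auto
qed

lemma Pinv_deriv: assumes "y \<in> {0<..<P d2}" shows "(Pinv has_real_derivative w (Pinv y)) (at y)"
proof -
  have x: "Pinv y \<in> {d1<..<d2}" using Pinv_in_open[OF assms] .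
  have "(Pinv has_real_derivative inverse (1 / w (Pinv y))) (at y)"
  proof (rule DERIV_inverse_function[where f=P and g=Pinv and x=y and a=0 and b="P d2", OF P_deriv[OF x]])
    have "0 < w (Pinv y)" using w_pos x by auto
    then show "1 / w (Pinv y) \<noteq> 0" by simp
    show "0 < y" "y < P d2" using assms by auto
    show "\<And>z. 0 < z \<Longrightarrow> z < P d2 \<Longrightarrow> P (Pinv z) = z" using P_Pinv by auto
    show "isCont Pinv y" using continuous_on_interior[OF Pinv_cont] assms by auto
  qed
  then show ?thesis by simp
qed

lemma Pinv_strict: assumes "y1 \<in> {0..P d2}" "y2 \<in> {0..P d2}" "y1 < y2" shows "Pinv y1 < Pinv y2"
proof (rule ccontr)
  assume "\<not> Pinv y1 < Pinv y2"
  then have "P (Pinv y2) \<le> P (Pinv y1)" using Pinv_in assms by (intro P_mono) auto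
  then show False using P_Pinv assms by auto
qed

end


context neck begin

lemma sin_sg: "\<sigma> = 1 \<or> \<sigma> = -1 \<Longrightarrow> sin (\<sigma> * a) = \<sigma> * sin a" by auto
lemma cos_sg: "\<sigma> = 1 \<or> \<sigma> = -1 \<Longrightarrow> cos (\<sigma> * a) = cos a" by auto

lemma neck_piece:
  assumes sg: "\<sigma> = 1 \<or> \<sigma> = -1"
  and rng: "\<And>t. t \<in> {t0..t1} \<Longrightarrow> y0 + \<sigma>*(t - t0) \<in> {0<..<P d2}"
  shows "traj_at r t0 t1 (\<lambda>t. Pinv (y0 + \<sigma>*(t-t0))) (\<lambda>t. C + \<sigma> * Th (Pinv (y0 + \<sigma>*(t-t0))))
           (\<lambda>t. \<sigma> * arccos (c / r (Pinv (y0 + \<sigma>*(t-t0)))))"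
  unfolding traj_at_def
proof (intro ballI conjI)
  fix t assume t: "t \<in> {t0..t1}"
  define y where "y = y0 + \<sigma>*(t - t0)"
  define x where "x = Pinv y"
  have yin: "y \<in> {0<..<P d2}" using rng[OF t] by (simp add: y_def)
  have xin: "x \<in> {d1<..<d2}" using Pinv_in_open[OF yin] by (simp add: x_def)
  then have xin': "x \<in> {d1..d2}" by auto
  define R where "R = r x"
  define u where "u = c / R"
  define W where "W = w x"
  have R: "0 < R" using rpos[OF xin'] by (simp add: R_def)
  have u: "0 < u" "u < 1" using cr[OF xin'] by (auto simp: u_def R_def)
  have W: "0 < W" using w_pos[OF xin'] by (simp add: W_def)
  have Wu: "W = sqrt (1 - u\<^sup>2)" by (simp add: W_def w_def u_def R_def)
  have sg2: "\<sigma> * \<sigma> = 1" using sg by auto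
  have gD: "((\<lambda>t. y0 + \<sigma>*(t - t0)) has_real_derivative \<sigma>) (at t)"
    by (auto intro!: derivative_eq_intros)
  have yin': "y0 + \<sigma>*(t - t0) \<in> {0<..<P d2}" using yin by (simp add: y_def)
  have sD: "((\<lambda>t. Pinv (y0 + \<sigma>*(t - t0))) has_real_derivative W * \<sigma>) (at t)"
    using DERIV_chain2[where g="\<lambda>t. y0 + \<sigma>*(t - t0)" and x=t, OF Pinv_deriv[OF yin'] gD]
    unfolding x_def W_def y_def .
  have rD: "((\<lambda>t. r (Pinv (y0 + \<sigma>*(t - t0)))) has_real_derivative deriv r x * (W * \<sigma>)) (at t)"
    using DERIV_chain2[OF r_deriv sD] unfolding x_def y_def .
  have uD: "((\<lambda>t. c / r (Pinv (y0 + \<sigma>*(t - t0)))) has_real_derivative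
             (0 * R - c * (deriv r x * (W * \<sigma>))) / (R * R)) (at t)"
    using DERIV_divide[OF DERIV_const rD] R unfolding R_def x_def y_def by simp
  have bD: "((\<lambda>t. \<sigma> * arccos (c / r (Pinv (y0 + \<sigma>*(t - t0))))) has_real_derivative
             \<sigma> * (inverse (- sqrt (1 - u\<^sup>2)) * ((0 * R - c * (deriv r x * (W * \<sigma>))) / (R * R)))) (at t)"
    using DERIV_cmult[OF DERIV_chain2[OF DERIV_arccos uD]] u unfolding u_def R_def x_def y_def by simp
  have ThD: "((\<lambda>t. C + \<sigma> * Th (Pinv (y0 + \<sigma>*(t - t0)))) has_real_derivative
             0 + \<sigma> * (hfun r c x * (W * \<sigma>))) (at t)"
  proof -
    have xin2: "Pinv (y0 + \<sigma>*(t - t0)) \<in> {d1<..<d2}" using xin by (simp add: x_def y_def)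
    show ?thesis
      using DERIV_add[OF DERIV_const DERIV_cmult[OF DERIV_chain2[where g="\<lambda>t. Pinv (y0 + \<sigma>*(t - t0))" and x=t, OF Th_deriv[OF xin2] sD]]]
      unfolding x_def y_def .
  qed
  have sx: "Pinv (y0 + \<sigma>*(t - t0)) = x" by (simp add: x_def y_def)
  have cu: "c / r x = u" by (simp add: u_def R_def)
  show "((\<lambda>t. Pinv (y0 + \<sigma>*(t - t0))) has_real_derivative sin (\<sigma> * arccos (c / r (Pinv (y0 + \<sigma>*(t - t0)))))) (at t)"
    unfolding sx cu sin_sg[OF sg] using sD u by (simp add: sin_arccos Wu mult.commute)
  show "((\<lambda>t. \<sigma> * arccos (c / r (Pinv (y0 + \<sigma>*(t - t0))))) has_real_derivative
      deriv r (Pinv (y0 + \<sigma>*(t - t0))) / r (Pinv (y0 + \<sigma>*(t - t0))) * cos (\<sigma> * arccos (c / r (Pinv (y0 + \<sigma>*(t - t0)))))) (at t)"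
  proof -
    have eq: "\<sigma> * (inverse (- W) * ((0 * R - c * (deriv r x * (W * \<sigma>))) / (R * R)))
          = deriv r x / r x * u"
    proof -
      have "\<sigma> * (inverse (- W) * ((0 * R - c * (deriv r x * (W * \<sigma>))) / (R * R)))
          = (\<sigma> * \<sigma>) * (c * deriv r x) / (R * R)" using W R by (simp add: field_simps)
      then show ?thesis using sg2 R by (simp add: u_def R_def field_simps)
    qed
    have ca: "cos (arccos u) = u" using u by simp
    show ?thesis unfolding sx cu cos_sg[OF sg] ca using bD[unfolded Wu[symmetric] eq] .
  qed
  show "((\<lambda>t. C + \<sigma> * Th (Pinv (y0 + \<sigma>*(t - t0)))) has_real_derivative
      cos (\<sigma> * arccos (c / r (Pinv (y0 + \<sigma>*(t - t0))))) / r (Pinv (y0 + \<sigma>*(t - t0)))) (at t)"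
  proof -
    have hW: "hfun r c x = c / (R\<^sup>2 * W)" by (simp add: hfun_def R_def W_def w_def)
    have "0 + \<sigma> * (hfun r c x * (W * \<sigma>)) = (\<sigma> * \<sigma>) * c / R\<^sup>2"
      unfolding hW using W R by (simp add: field_simps)
    then have "0 + \<sigma> * (hfun r c x * (W * \<sigma>)) = u / R"
      using sg2 by (simp add: u_def power2_eq_square)
    moreover have ca: "cos (arccos u) = u" using u by simp
    ultimately show ?thesis unfolding sx cu cos_sg[OF sg] ca using ThD by (simp add: R_def)
  qed
qed

end


lemma alg_theta:
  fixes S Co c :: real
  assumes sc: "S\<^sup>2 + Co\<^sup>2 = 1" and c: "0 < c"
  defines "D \<equiv> Co\<^sup>2 + c * S\<^sup>2" and "N \<equiv> (c - 1) * S * Co"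
  shows "1 + inverse (1 + (N / D)\<^sup>2) * (((c - 1) * (Co * Co - S * S) * D - N * (2 * (c - 1) * S * Co)) / (D * D))
         = c / (1 - (1 - c\<^sup>2) * S\<^sup>2)"
proof -
  have Dp: "0 < D"
  proof (cases "S = 0")
    case True then show ?thesis using sc by (simp add: D_def)
  next
    case False
    then have "0 < c * S\<^sup>2" using c by simp
    moreover have "0 \<le> Co\<^sup>2" by simp
    ultimately show ?thesis unfolding D_def by linarith
  qed
  have m2: "N\<^sup>2 + D\<^sup>2 = 1 - (1 - c\<^sup>2) * S\<^sup>2"
  proof -
    have Co2: "Co\<^sup>2 = 1 - S\<^sup>2" using sc by simp
    have "N\<^sup>2 + D\<^sup>2 = (c-1)\<^sup>2 * S\<^sup>2 * Co\<^sup>2 + (Co\<^sup>2 + c * S\<^sup>2)\<^sup>2" by (simp add: N_def D_def power_mult_distrib)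
    also have "\<dots> = 1 - (1 - c\<^sup>2) * S\<^sup>2" unfolding Co2 by (simp add: power2_eq_square algebra_simps)
    finally show ?thesis .
  qed
  have m2p: "0 < 1 - (1 - c\<^sup>2) * S\<^sup>2"
  proof -
    have "0 < D\<^sup>2" using Dp by simp
    moreover have "0 \<le> N\<^sup>2" by simp
    ultimately show ?thesis unfolding m2[symmetric] by linarith
  qed
  have num: "(c - 1) * (Co * Co - S * S) * D - N * (2 * (c - 1) * S * Co) = (c - 1) * (Co\<^sup>2 - c * S\<^sup>2)"
  proof -
    have Co2: "Co\<^sup>2 = 1 - S\<^sup>2" using sc by simp
    have "(c - 1) * (Co * Co - S * S) * D - N * (2 * (c - 1) * S * Co)
       = (c - 1) * ((Co\<^sup>2 - S\<^sup>2) * (Co\<^sup>2 + c * S\<^sup>2) - 2 * (c - 1) * S\<^sup>2 * Co\<^sup>2)"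
      by (simp add: N_def D_def power2_eq_square algebra_simps)
    also have "\<dots> = (c - 1) * (Co\<^sup>2 - c * S\<^sup>2)" unfolding Co2 by (simp add: power2_eq_square algebra_simps)
    finally show ?thesis .
  qed
  have inv: "inverse (1 + (N / D)\<^sup>2) = D\<^sup>2 / (1 - (1 - c\<^sup>2) * S\<^sup>2)"
  proof -
    have "1 + (N / D)\<^sup>2 = (N\<^sup>2 + D\<^sup>2) / D\<^sup>2" using Dp by (simp add: field_simps power2_eq_square)
    then show ?thesis unfolding m2 by simp
  qed
  have fin: "1 - (1 - c\<^sup>2) * S\<^sup>2 + (c - 1) * (Co\<^sup>2 - c * S\<^sup>2) = c"
  proof -
    have Co2: "Co\<^sup>2 = 1 - S\<^sup>2" using sc by simp
    show ?thesis unfolding Co2 by (simp add: power2_eq_square algebra_simps)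
  qed
  define X where "X = 1 - (1 - c\<^sup>2) * S\<^sup>2"
  define Y where "Y = (c - 1) * (Co\<^sup>2 - c * S\<^sup>2)"
  have X: "0 < X" using m2p by (simp add: X_def)
  have "D\<^sup>2 / X * (Y / (D * D)) = Y / X" using Dp by (simp add: power2_eq_square)
  then have "1 + D\<^sup>2 / X * (Y / (D * D)) = (X + Y) / X" using X by (simp add: field_simps)
  also have "\<dots> = c / X" using fin by (simp add: X_def Y_def)
  finally show ?thesis unfolding inv num X_def[symmetric] Y_def[symmetric] .
qed


lemma traj_at_shift:
  assumes "traj_at r a e s th b"
  shows "traj_at r (a + h) (e + h) (\<lambda>t. s (t - h)) (\<lambda>t. th (t - h) + C) (\<lambda>t. b (t - h))"
  unfolding traj_at_def
proof (intro ballI conjI)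
  fix t assume t: "t \<in> {a + h..e + h}"
  then have t': "t - h \<in> {a..e}" by auto
  have gD: "((\<lambda>t. t - h) has_real_derivative 1) (at t)" by (auto intro!: derivative_eq_intros)
  note d = assms[unfolded traj_at_def, rule_format, OF t']
  show "((\<lambda>t. s (t - h)) has_real_derivative sin (b (t - h))) (at t)"
    using DERIV_chain2[where g="\<lambda>t. t - h", OF d[THEN conjunct1] gD] by simp
  show "((\<lambda>t. b (t - h)) has_real_derivative deriv r (s (t - h)) / r (s (t - h)) * cos (b (t - h))) (at t)"
    using DERIV_chain2[where g="\<lambda>t. t - h", OF d[THEN conjunct2, THEN conjunct1] gD] by simp
  show "((\<lambda>t. th (t - h) + C) has_real_derivative cos (b (t - h)) / r (s (t - h))) (at t)"
    using DERIV_add[OF DERIV_chain2[where g="\<lambda>t. t - h", OF d[THEN conjunct2, THEN conjunct2] gD] DERIV_const[of C]]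
    by simp
qed

context neck begin

definition "q = sqrt (1 - c\<^sup>2)"
definition "k = q / c"

lemma q: "0 < q" "q < 1" "q\<^sup>2 = 1 - c\<^sup>2"
proof -
  have "c\<^sup>2 < 1" using c c1 by (simp add: power_less_one_iff abs_less_iff)
  moreover have "0 < c\<^sup>2" using c by simp
  ultimately show "0 < q" "q < 1" "q\<^sup>2 = 1 - c\<^sup>2" by (auto simp: q_def)
qed

lemma arctan_k: "arctan k = arccos c"
proof -
  have a1: "arccos c < pi/2" using arccos_less_arccos[of 0 c] c c1 by simp
  have a0: "0 < arccos c" using arccos_lt_bounded[of c] c c1 by simp
  have "tan (arccos c) = k" using c c1 by (simp add: tan_def sin_arccos k_def q_def)
  then show ?thesis using arctan_tan[of "arccos c"] a0 a1 by simp
qed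

lemma cap_facts:
  fixes t :: real
  defines "v \<equiv> q * sin t"
  shows "\<bar>v\<bar> < 1" "0 < 1 - v\<^sup>2"
    "((\<lambda>t. arccos (q * sin t)) has_real_derivative - (q * cos t) / sqrt (1 - v\<^sup>2)) (at t)"
    "((\<lambda>t. arctan (k * cos t)) has_real_derivative - (c * v) / (1 - v\<^sup>2)) (at t)"
    "((\<lambda>t. arctan ((c - 1) * sin t * cos t / ((cos t)\<^sup>2 + c * (sin t)\<^sup>2)) + t) has_real_derivative c / (1 - v\<^sup>2)) (at t)"
    "sin (arctan (k * cos t)) = q * cos t / sqrt (1 - v\<^sup>2)"
    "cos (arctan (k * cos t)) = c / sqrt (1 - v\<^sup>2)"
proof -
  have sa: "\<bar>sin t\<bar> \<le> 1" by simp
  have "\<bar>v\<bar> = q * \<bar>sin t\<bar>" using q by (simp add: v_def abs_mult)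
  also have "\<dots> \<le> q" using sa q by (simp add: mult_left_le)
  finally show v1: "\<bar>v\<bar> < 1" using q by linarith
  then have "v\<^sup>2 < 1" by (simp add: abs_square_less_1)
  then show m: "0 < 1 - v\<^sup>2" by simp
  have v1': "- 1 < v" "v < 1" using v1 by auto
  have "((\<lambda>t. arccos (q * sin t)) has_real_derivative inverse (- sqrt (1 - v\<^sup>2)) * (q * cos t)) (at t)"
    using DERIV_chain2[where g="\<lambda>t. q * sin t", OF DERIV_arccos[of "q * sin t"]] v1' unfolding v_def
    by (auto intro!: derivative_eq_intros)
  then show "((\<lambda>t. arccos (q * sin t)) has_real_derivative - (q * cos t) / sqrt (1 - v\<^sup>2)) (at t)"
    by (simp add: divide_inverse mult.commute)
  have k2: "1 + (k * cos t)\<^sup>2 = (1 - v\<^sup>2) / c\<^sup>2"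
  proof -
    have "1 + (k * cos t)\<^sup>2 = (c\<^sup>2 + q\<^sup>2 * (cos t)\<^sup>2) / c\<^sup>2" using c by (simp add: k_def field_simps power2_eq_square)
    also have "c\<^sup>2 + q\<^sup>2 * (cos t)\<^sup>2 = 1 - v\<^sup>2"
    proof -
      have "c\<^sup>2 + q\<^sup>2 * (cos t)\<^sup>2 = c\<^sup>2 + (1 - c\<^sup>2) * (1 - (sin t)\<^sup>2)" by (simp add: cos_squared_eq q(3))
      also have "\<dots> = 1 - v\<^sup>2" by (simp add: v_def power_mult_distrib q(3) algebra_simps)
      finally show ?thesis .
    qed
    finally show ?thesis .
  qed
  have sk: "sqrt (1 + (k * cos t)\<^sup>2) = sqrt (1 - v\<^sup>2) / c"
    unfolding k2 using c by (simp add: real_sqrt_divide)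
  have "((\<lambda>t. arctan (k * cos t)) has_real_derivative inverse (1 + (k * cos t)\<^sup>2) * (k * - sin t)) (at t)"
    using DERIV_chain2[where g="\<lambda>t. k * cos t", OF DERIV_arctan[of "k * cos t"]]
    by (auto intro!: derivative_eq_intros)
  moreover have "inverse (1 + (k * cos t)\<^sup>2) * (k * - sin t) = - (c * v) / (1 - v\<^sup>2)"
    unfolding k2 using c m by (simp add: k_def v_def field_simps power2_eq_square)
  ultimately show "((\<lambda>t. arctan (k * cos t)) has_real_derivative - (c * v) / (1 - v\<^sup>2)) (at t)" by simp
  show "sin (arctan (k * cos t)) = q * cos t / sqrt (1 - v\<^sup>2)"
    unfolding sin_arctan sk using c by (simp add: k_def field_simps)
  show "cos (arctan (k * cos t)) = c / sqrt (1 - v\<^sup>2)"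
    unfolding cos_arctan sk using c by (simp add: field_simps)
  define D where "D = (cos t)\<^sup>2 + c * (sin t)\<^sup>2"
  define N where "N = (c - 1) * sin t * cos t"
  have Dp: "D \<noteq> 0"
  proof (cases "sin t = 0")
    case True then show ?thesis using sin_cos_squared_add[of t] by (simp add: D_def)
  next
    case False
    then have "0 < c * (sin t)\<^sup>2" using c by simp
    moreover have "0 \<le> (cos t)\<^sup>2" by simp
    ultimately show ?thesis unfolding D_def by linarith
  qed
  have nD: "((\<lambda>t. (c - 1) * sin t * cos t) has_real_derivative (c - 1) * (cos t * cos t - sin t * sin t)) (at t)"
    by (auto intro!: derivative_eq_intros simp: algebra_simps)
  have dD: "((\<lambda>t. (cos t)\<^sup>2 + c * (sin t)\<^sup>2) has_real_derivative 2 * (c - 1) * sin t * cos t) (at t)"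
    by (auto intro!: derivative_eq_intros simp: algebra_simps power2_eq_square)
  have qD: "((\<lambda>t. (c - 1) * sin t * cos t / ((cos t)\<^sup>2 + c * (sin t)\<^sup>2)) has_real_derivative
      ((c - 1) * (cos t * cos t - sin t * sin t) * D - N * (2 * (c - 1) * sin t * cos t)) / (D * D)) (at t)"
    using DERIV_divide[OF nD dD] Dp unfolding D_def N_def by simp
  have aD: "((\<lambda>t. arctan ((c - 1) * sin t * cos t / ((cos t)\<^sup>2 + c * (sin t)\<^sup>2)) + t) has_real_derivative
      inverse (1 + (N / D)\<^sup>2) * (((c - 1) * (cos t * cos t - sin t * sin t) * D - N * (2 * (c - 1) * sin t * cos t)) / (D * D)) + 1) (at t)"
    using DERIV_add[OF DERIV_chain2[where g="\<lambda>t. (c - 1) * sin t * cos t / ((cos t)\<^sup>2 + c * (sin t)\<^sup>2)", OF DERIV_arctan qD] DERIV_ident]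
    unfolding D_def N_def by simp
  have "1 + inverse (1 + (N / D)\<^sup>2) * (((c - 1) * (cos t * cos t - sin t * sin t) * D - N * (2 * (c - 1) * sin t * cos t)) / (D * D))
        = c / (1 - (1 - c\<^sup>2) * (sin t)\<^sup>2)"
    unfolding D_def N_def by (rule alg_theta) (use c in auto)
  moreover have "1 - (1 - c\<^sup>2) * (sin t)\<^sup>2 = 1 - v\<^sup>2" unfolding v_def power_mult_distrib q(3) ..
  ultimately show "((\<lambda>t. arctan ((c - 1) * sin t * cos t / ((cos t)\<^sup>2 + c * (sin t)\<^sup>2)) + t) has_real_derivative c / (1 - v\<^sup>2)) (at t)"
    using aD by (simp add: add.commute)
qed

end


context neck begin

lemma sqrt_sq_m: "0 < m2 \<Longrightarrow> sqrt m2 * sqrt m2 = (m2::real)" by simp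

lemma bottom_cap:
  "traj_at r 0 pi (\<lambda>t. arccos (q * sin t))
      (\<lambda>t. arctan ((c - 1) * sin t * cos t / ((cos t)\<^sup>2 + c * (sin t)\<^sup>2)) + t)
      (\<lambda>t. - arctan (k * cos t))"
  unfolding traj_at_def
proof (intro ballI conjI)
  fix t assume t: "t \<in> {0..pi}"
  define v where "v = q * sin t"
  define m where "m = sqrt (1 - v\<^sup>2)"
  note F = cap_facts[of t, folded v_def, folded m_def]
  have v0: "0 \<le> v" using t q by (simp add: v_def sin_ge_zero)
  have v1: "v < 1" using F(1) by simp
  have mp: "0 < m" using F(2) by (simp add: m_def)
  have mm: "m * m = 1 - v\<^sup>2" using F(2) by (simp add: m_def)
  define x where "x = arccos v"
  have x0: "0 < x" using arccos_lt_bounded[of v] v0 v1 by (simp add: x_def)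
  have x1: "x \<le> pi/2" using arccos_le_pi2[of v] v0 v1 by (simp add: x_def)
  have rx: "r x = m" using r_sin[of x] x0 x1 v0 v1 by (simp add: x_def sin_arccos m_def)
  have drx: "deriv r x = v" using dr_cos[of x] x0 x1 v0 v1 by (simp add: x_def)
  have ax: "arccos (q * sin t) = x" by (simp add: x_def v_def)
  show "((\<lambda>t. arccos (q * sin t)) has_real_derivative sin (- arctan (k * cos t))) (at t)"
    using F(3) by (simp add: F(6))
  show "((\<lambda>t. - arctan (k * cos t)) has_real_derivative
      deriv r (arccos (q * sin t)) / r (arccos (q * sin t)) * cos (- arctan (k * cos t))) (at t)"
  proof -
    have "deriv r x / r x * cos (- arctan (k * cos t)) = - (- (c * v) / (1 - v\<^sup>2))"
      unfolding rx drx cos_minus F(7) mm[symmetric] using mp by (simp add: field_simps)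
    then show ?thesis unfolding ax using DERIV_minus[OF F(4)] by simp
  qed
  show "((\<lambda>t. arctan ((c - 1) * sin t * cos t / ((cos t)\<^sup>2 + c * (sin t)\<^sup>2)) + t) has_real_derivative
      cos (- arctan (k * cos t)) / r (arccos (q * sin t))) (at t)"
  proof -
    have "cos (- arctan (k * cos t)) / r x = c / (1 - v\<^sup>2)"
      unfolding rx cos_minus F(7) mm[symmetric] using mp by (simp add: field_simps)
    then show ?thesis unfolding ax using F(5) by simp
  qed
qed

lemma top_cap:
  "traj_at r 0 pi (\<lambda>t. M/2 - arccos (q * sin t))
      (\<lambda>t. arctan ((c - 1) * sin t * cos t / ((cos t)\<^sup>2 + c * (sin t)\<^sup>2)) + t)
      (\<lambda>t. arctan (k * cos t))"
  unfolding traj_at_def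
proof (intro ballI conjI)
  fix t assume t: "t \<in> {0..pi}"
  define v where "v = q * sin t"
  define m where "m = sqrt (1 - v\<^sup>2)"
  note F = cap_facts[of t, folded v_def, folded m_def]
  have v0: "0 \<le> v" using t q by (simp add: v_def sin_ge_zero)
  have v1: "v < 1" using F(1) by simp
  have mp: "0 < m" using F(2) by (simp add: m_def)
  have mm: "m * m = 1 - v\<^sup>2" using F(2) by (simp add: m_def)
  define x where "x = M/2 - arccos v"
  have x0: "0 < arccos v" using arccos_lt_bounded[of v] v0 v1 by simp
  have x1: "arccos v \<le> pi/2" using arccos_le_pi2[of v] v0 v1 by simp
  have xin: "x \<in> {M/2-pi/2..<M/2}" using x0 x1 by (simp add: x_def)
  have rx: "r x = m" using r_top[OF xin] v0 v1 by (simp add: x_def sin_arccos m_def)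
  have drx: "deriv r x = - v" using dr_top[OF xin] v0 v1 by (simp add: x_def)
  have ax: "M/2 - arccos (q * sin t) = x" by (simp add: x_def v_def)
  show "((\<lambda>t. M/2 - arccos (q * sin t)) has_real_derivative sin (arctan (k * cos t))) (at t)"
    using DERIV_diff[OF DERIV_const[of "M/2"] F(3)] by (simp add: F(6))
  show "((\<lambda>t. arctan (k * cos t)) has_real_derivative
      deriv r (M/2 - arccos (q * sin t)) / r (M/2 - arccos (q * sin t)) * cos (arctan (k * cos t))) (at t)"
  proof -
    have "deriv r x / r x * cos (arctan (k * cos t)) = - (c * v) / (1 - v\<^sup>2)"
      unfolding rx drx F(7) mm[symmetric] using mp by (simp add: field_simps)
    then show ?thesis unfolding ax using F(4) by simp
  qed
  show "((\<lambda>t. arctan ((c - 1) * sin t * cos t / ((cos t)\<^sup>2 + c * (sin t)\<^sup>2)) + t) has_real_derivative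
      cos (arctan (k * cos t)) / r (M/2 - arccos (q * sin t))) (at t)"
  proof -
    have "cos (arctan (k * cos t)) / r x = c / (1 - v\<^sup>2)"
      unfolding rx F(7) mm[symmetric] using mp by (simp add: field_simps)
    then show ?thesis unfolding ax using F(5) by simp
  qed
qed

end


context neck begin

definition "a1 = pi/2"
definition "a2 = M/2 - pi/2"
definition "m4 = M/4"
definition "A0 = P a1"
definition "A1 = P m4"
definition "A2 = P a2"
definition "tau = A2 - A1"
definition "e2 = pi + tau"
definition "e3 = e2 + (A2 - A0)"
definition "e4 = pi + e3"
definition "TT = e4 + (A1 - A0)"
definition "capTh t = arctan ((c - 1) * sin t * cos t / ((cos t)\<^sup>2 + c * (sin t)\<^sup>2)) + t"
definition "C2 = Th a2 - Th m4"
definition "C3 = C2 + pi + Th a2"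
definition "C4 = C3 - Th a1"
definition "C5 = C4 + pi - Th a1"

lemma pts: "d1 < a1" "a1 < m4" "m4 < a2" "a2 < d2"
  using d1 d2_gt M_gt by (auto simp: a1_def a2_def m4_def)

lemma pts_in: "a1 \<in> {d1..d2}" "m4 \<in> {d1..d2}" "a2 \<in> {d1..d2}" "a1 \<in> {d1<..<d2}" "m4 \<in> {d1<..<d2}" "a2 \<in> {d1<..<d2}"
  using pts by auto

lemma As: "0 < A0" "A0 < A1" "A1 < A2" "A2 < P d2"
proof -
  have d1in: "d1 \<in> {d1..d2}" "d2 \<in> {d1..d2}" using pts by auto
  show "0 < A0" using P_strict[OF d1in(1) pts_in(1) pts(1)] P_d1 by (simp add: A0_def)
  show "A0 < A1" using P_strict[OF pts_in(1) pts_in(2) pts(2)] by (simp add: A0_def A1_def)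
  show "A1 < A2" using P_strict[OF pts_in(2) pts_in(3) pts(3)] by (simp add: A1_def A2_def)
  show "A2 < P d2" using P_strict[OF pts_in(3) d1in(2) pts(4)] by (simp add: A2_def)
qed

lemma Pinv_As: "Pinv A0 = a1" "Pinv A1 = m4" "Pinv A2 = a2"
  using Pinv_P pts_in by (auto simp: A0_def A1_def A2_def)

lemma r_a: "r a1 = 1" "r a2 = 1" "r m4 = rmin"
proof -
  show "r a1 = 1" using r_sin[of "pi/2"] by (simp add: a1_def)
  then show "r a2 = 1" using r_sym[of "pi/2"] by (simp add: a1_def a2_def)
  show "r m4 = rmin" using rmin by (simp add: m4_def)
qed

lemma capTh_0: "capTh 0 = 0" and capTh_pi: "capTh pi = pi" by (simp_all add: capTh_def)

lemma arctan_mk: "arctan (- k) = - arccos c" using arctan_k by (simp add: arctan_minus)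

lemma times: "0 < tau" "tau < e2" "e2 < e3" "e3 < e4" "e4 < TT"
  using As pi_gt_zero by (auto simp: tau_def e2_def e3_def e4_def TT_def)

definition "s1 t = Pinv (A1 + 1 * (t - 0))"
definition "th1 t = - Th m4 + 1 * Th (Pinv (A1 + 1 * (t - 0)))"
definition "b1 t = 1 * arccos (c / r (Pinv (A1 + 1 * (t - 0))))"
definition "s2 t = M/2 - arccos (q * sin (t - tau))"
definition "th2 t = capTh (t - tau) + C2"
definition "b2 t = arctan (k * cos (t - tau))"
definition "s3 t = Pinv (A2 + -1 * (t - e2))"
definition "th3 t = C3 + -1 * Th (Pinv (A2 + -1 * (t - e2)))"
definition "b3 t = -1 * arccos (c / r (Pinv (A2 + -1 * (t - e2))))"
definition "s4 t = arccos (q * sin (t - e3))"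
definition "th4 t = capTh (t - e3) + C4"
definition "b4 t = - arctan (k * cos (t - e3))"
definition "s5 t = Pinv (A0 + 1 * (t - e4))"
definition "th5 t = C5 + 1 * Th (Pinv (A0 + 1 * (t - e4)))"
definition "b5 t = 1 * arccos (c / r (Pinv (A0 + 1 * (t - e4))))"

lemma piece1: "traj_on r 0 tau s1 th1 b1"
proof -
  have "traj_at r 0 tau s1 th1 b1"
    unfolding s1_def[abs_def] th1_def[abs_def] b1_def[abs_def]
    by (rule neck_piece) (use As in \<open>auto simp: tau_def\<close>)
  then show ?thesis by (rule traj_at_on)
qed

lemma piece2: "traj_on r tau e2 s2 th2 b2"
proof -
  have "traj_at r (0 + tau) (pi + tau) s2 th2 b2"
    unfolding s2_def[abs_def] th2_def[abs_def] b2_def[abs_def] capTh_def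
    by (rule traj_at_shift[OF top_cap])
  then show ?thesis by (intro traj_at_on) (simp add: e2_def)
qed

lemma piece3: "traj_on r e2 e3 s3 th3 b3"
proof -
  have "traj_at r e2 e3 s3 th3 b3"
    unfolding s3_def[abs_def] th3_def[abs_def] b3_def[abs_def]
    by (rule neck_piece) (use As in \<open>auto simp: e3_def\<close>)
  then show ?thesis by (rule traj_at_on)
qed

lemma piece4: "traj_on r e3 e4 s4 th4 b4"
proof -
  have "traj_at r (0 + e3) (pi + e3) s4 th4 b4"
    unfolding s4_def[abs_def] th4_def[abs_def] b4_def[abs_def] capTh_def
    by (rule traj_at_shift[OF bottom_cap])
  then show ?thesis by (intro traj_at_on) (simp add: e4_def)
qed

lemma piece5: "traj_on r e4 TT s5 th5 b5"
proof -
  have "traj_at r e4 TT s5 th5 b5"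
    unfolding s5_def[abs_def] th5_def[abs_def] b5_def[abs_def]
    by (rule neck_piece) (use As in \<open>auto simp: TT_def\<close>)
  then show ?thesis by (rule traj_at_on)
qed

end


context neck begin

lemma arccos_c_r: "arccos (c / r a1) = arccos c" "arccos (c / r a2) = arccos c"
  using r_a by simp_all

lemma j1: "s1 tau = s2 tau" "th1 tau = th2 tau" "b1 tau = b2 tau"
proof -
  have e: "A1 + 1 * (tau - 0) = A2" by (simp add: tau_def)
  show "s1 tau = s2 tau" unfolding s1_def s2_def e Pinv_As by (simp add: a2_def)
  show "th1 tau = th2 tau" unfolding th1_def th2_def e Pinv_As by (simp add: capTh_0 C2_def)
  show "b1 tau = b2 tau" unfolding b1_def b2_def e Pinv_As by (simp add: arccos_c_r arctan_k)
qed

lemma j2: "s2 e2 = s3 e2" "th2 e2 = th3 e2" "b2 e2 = b3 e2"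
proof -
  have e: "A2 + -1 * (e2 - e2) = A2" by simp
  have p: "e2 - tau = pi" by (simp add: e2_def)
  show "s2 e2 = s3 e2" unfolding s2_def s3_def e p Pinv_As by (simp add: a2_def)
  show "th2 e2 = th3 e2" unfolding th2_def th3_def e p Pinv_As by (simp add: capTh_pi C3_def)
  show "b2 e2 = b3 e2" unfolding b2_def b3_def e p Pinv_As by (simp add: arccos_c_r arctan_mk)
qed

lemma j3: "s3 e3 = s4 e3" "th3 e3 = th4 e3" "b3 e3 = b4 e3"
proof -
  have e: "A2 + -1 * (e3 - e2) = A0" by (simp add: e3_def)
  show "s3 e3 = s4 e3" unfolding s3_def s4_def e Pinv_As by (simp add: a1_def)
  show "th3 e3 = th4 e3" unfolding th3_def th4_def e Pinv_As by (simp add: capTh_0 C4_def)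
  show "b3 e3 = b4 e3" unfolding b3_def b4_def e Pinv_As by (simp add: arccos_c_r arctan_k)
qed

lemma j4: "s4 e4 = s5 e4" "th4 e4 = th5 e4" "b4 e4 = b5 e4"
proof -
  have e: "A0 + 1 * (e4 - e4) = A0" by simp
  have p: "e4 - e3 = pi" by (simp add: e4_def)
  show "s4 e4 = s5 e4" unfolding s4_def s5_def e p Pinv_As by (simp add: a1_def)
  show "th4 e4 = th5 e4" unfolding th4_def th5_def e p Pinv_As by (simp add: capTh_pi C5_def)
  show "b4 e4 = b5 e4" unfolding b4_def b5_def e p Pinv_As by (simp add: arccos_c_r arctan_mk)
qed

definition "SS t = (if t \<le> tau then s1 t else if t \<le> e2 then s2 t else if t \<le> e3 then s3 t else if t \<le> e4 then s4 t else s5 t)"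
definition "THH t = (if t \<le> tau then th1 t else if t \<le> e2 then th2 t else if t \<le> e3 then th3 t else if t \<le> e4 then th4 t else th5 t)"
definition "BB t = (if t \<le> tau then b1 t else if t \<le> e2 then b2 t else if t \<le> e3 then b3 t else if t \<le> e4 then b4 t else b5 t)"

lemma full: "traj_on r 0 TT SS THH BB"
proof -
  note tm = times
  have G4: "traj_on r e3 TT (\<lambda>t. if t \<le> e4 then s4 t else s5 t) (\<lambda>t. if t \<le> e4 then th4 t else th5 t) (\<lambda>t. if t \<le> e4 then b4 t else b5 t)"
    by (rule glue[OF _ _ piece4 piece5 j4]) (use tm in auto)
  have G3: "traj_on r e2 TT (\<lambda>t. if t \<le> e3 then s3 t else if t \<le> e4 then s4 t else s5 t)
       (\<lambda>t. if t \<le> e3 then th3 t else if t \<le> e4 then th4 t else th5 t) (\<lambda>t. if t \<le> e3 then b3 t else if t \<le> e4 then b4 t else b5 t)"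
    by (rule glue[OF _ _ piece3 G4]) (use tm j3 in auto)
  have G2: "traj_on r tau TT (\<lambda>t. if t \<le> e2 then s2 t else if t \<le> e3 then s3 t else if t \<le> e4 then s4 t else s5 t)
       (\<lambda>t. if t \<le> e2 then th2 t else if t \<le> e3 then th3 t else if t \<le> e4 then th4 t else th5 t)
       (\<lambda>t. if t \<le> e2 then b2 t else if t \<le> e3 then b3 t else if t \<le> e4 then b4 t else b5 t)"
    by (rule glue[OF _ _ piece2 G3]) (use tm j2 in auto)
  have G1: "traj_on r 0 TT (\<lambda>t. if t \<le> tau then s1 t else if t \<le> e2 then s2 t else if t \<le> e3 then s3 t else if t \<le> e4 then s4 t else s5 t)
       (\<lambda>t. if t \<le> tau then th1 t else if t \<le> e2 then th2 t else if t \<le> e3 then th3 t else if t \<le> e4 then th4 t else th5 t)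
       (\<lambda>t. if t \<le> tau then b1 t else if t \<le> e2 then b2 t else if t \<le> e3 then b3 t else if t \<le> e4 then b4 t else b5 t)"
    by (rule glue[OF _ _ piece1 G2]) (use tm j1 in auto)
  then show ?thesis unfolding SS_def[abs_def] THH_def[abs_def] BB_def[abs_def] .
qed

end


context neck begin

lemma cap_range: assumes "u \<in> {0..pi}" shows "0 < arccos (q * sin u)" "arccos (q * sin u) \<le> pi/2"
proof -
  have v0: "0 \<le> q * sin u" using assms q by (simp add: sin_ge_zero)
  have "\<bar>q * sin u\<bar> < 1" using cap_facts(1)[of u] by simp
  then have v1: "q * sin u < 1" by simp
  show "0 < arccos (q * sin u)" using arccos_lt_bounded[of "q * sin u"] v0 v1 by simp
  show "arccos (q * sin u) \<le> pi/2" using arccos_le_pi2[of "q * sin u"] v0 v1 by simp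
qed

lemma Pinv_range: assumes "y \<in> {0..P d2}" shows "0 < Pinv y" "Pinv y < M/2"
  using Pinv_in[OF assms] d1 d2_gt by auto

lemma PA1: "Pinv A1 = M/4" using Pinv_As(2) by (simp add: m4_def)

lemma SS_0: "SS 0 = M/4" and BB_0: "BB 0 = arccos (c / rmin)" and THH_0: "THH 0 = 0"
  using times rmin by (simp_all add: SS_def BB_def THH_def s1_def b1_def th1_def m4_def PA1)

lemma TT_eq: "A0 + 1 * (TT - e4) = A1" by (simp add: TT_def)

lemma SS_T: "SS TT = M/4" and BB_T: "BB TT = arccos (c / rmin)" and THH_T: "THH TT = C5 + Th m4"
  using times rmin TT_eq by (simp_all add: SS_def BB_def THH_def s5_def b5_def th5_def m4_def PA1)

lemma Th_diff: "Th a2 - Th a1 = integral {pi/2..M/2-pi/2} (hfun r c)"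
proof -
  have int: "hfun r c integrable_on {d1..a2}"
    by (rule integrable_continuous_real, rule continuous_on_subset[OF cont_h]) (use pts in auto)
  have "integral {d1..a1} (hfun r c) + integral {a1..a2} (hfun r c) = integral {d1..a2} (hfun r c)"
    by (rule Henstock_Kurzweil_Integration.integral_combine[OF _ _ int]) (use pts in auto)
  then show ?thesis by (simp add: Th_def a1_def a2_def)
qed

lemma THH_diff: "THH TT - THH 0 = 2 * integral {pi/2..M/2-pi/2} (hfun r c) + 2 * pi"
  unfolding THH_T THH_0 Th_diff[symmetric] by (simp add: C5_def C4_def C3_def C2_def)

lemma SS_range: assumes t: "t \<in> {0..TT}" shows "0 < SS t \<and> SS t < M/2"
proof -
  note tm = times
  have MM: "pi/2 < M/2 - pi/2" using M_gt by simp
  consider "t \<le> tau" | "tau < t" "t \<le> e2" | "e2 < t" "t \<le> e3" | "e3 < t" "t \<le> e4" | "e4 < t"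
    by linarith
  then show ?thesis
  proof cases
    case 1
    have "A1 + 1 * (t - 0) \<in> {0..P d2}" using 1 t As by (auto simp: tau_def)
    then show ?thesis using 1 Pinv_range by (simp add: SS_def s1_def)
  next
    case 2
    have "t - tau \<in> {0..pi}" using 2 by (auto simp: e2_def)
    then show ?thesis using 2 cap_range[of "t - tau"] tm MM pi_gt_zero by (auto simp: SS_def s2_def)
  next
    case 3
    have "A2 + -1 * (t - e2) \<in> {0..P d2}" using 3 t As by (auto simp: e3_def)
    then show ?thesis using 3 tm Pinv_range by (auto simp: SS_def s3_def)
  next
    case 4
    have "t - e3 \<in> {0..pi}" using 4 by (auto simp: e4_def)
    then show ?thesis using 4 cap_range[of "t - e3"] tm MM pi_gt_zero by (auto simp: SS_def s4_def)
  next
    case 5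
    have "A0 + 1 * (t - e4) \<in> {0..P d2}" using 5 t As by (auto simp: TT_def)
    then show ?thesis using 5 tm Pinv_range by (auto simp: SS_def s5_def)
  qed
qed

lemma first_return: assumes t: "t \<in> {0<..<TT}" shows "\<not> (SS t = M/4 \<and> sin (BB t) > 0)"
proof -
  note tm = times
  have MM: "M/4 < M/2 - pi/2" using M_gt by simp
  have MM2: "pi/2 < M/4" using M_gt by simp
  have A1in: "A1 \<in> {0..P d2}" using As by auto
  consider "t \<le> tau" | "tau < t" "t \<le> e2" | "e2 < t" "t \<le> e3" | "e3 < t" "t \<le> e4" | "e4 < t"
    by linarith
  then show ?thesis
  proof cases
    case 1
    have y: "A1 + 1 * (t - 0) \<in> {0..P d2}" using 1 t As by (auto simp: tau_def)
    have "Pinv A1 < Pinv (A1 + 1 * (t - 0))" by (rule Pinv_strict[OF A1in y]) (use t in auto)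
    then show ?thesis using 1 Pinv_As by (auto simp: SS_def s1_def m4_def)
  next
    case 2
    have "t - tau \<in> {0..pi}" using 2 by (auto simp: e2_def)
    then show ?thesis using 2 cap_range[of "t - tau"] tm MM by (auto simp: SS_def s2_def)
  next
    case 3
    have y: "A2 + -1 * (t - e2) \<in> {0..P d2}" using 3 t As by (auto simp: e3_def)
    have cr': "0 < c / r (Pinv (A2 + -1 * (t - e2)))" "c / r (Pinv (A2 + -1 * (t - e2))) < 1"
      using cr[OF Pinv_in[OF y]] by auto
    have "0 \<le> sin (arccos (c / r (Pinv (A2 + -1 * (t - e2)))))"
      using cr' by (intro sin_ge_zero arccos_lbound arccos_ubound) auto
    then have "\<not> sin (BB t) > 0" using 3 tm by (auto simp: BB_def b3_def)
    then show ?thesis by blast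
  next
    case 4
    have "t - e3 \<in> {0..pi}" using 4 by (auto simp: e4_def)
    then show ?thesis using 4 cap_range[of "t - e3"] tm MM2 by (auto simp: SS_def s4_def)
  next
    case 5
    have y: "A0 + 1 * (t - e4) \<in> {0..P d2}" using 5 t As by (auto simp: TT_def)
    have "Pinv (A0 + 1 * (t - e4)) < Pinv A1" by (rule Pinv_strict[OF y A1in]) (use t in \<open>auto simp: TT_def\<close>)
    then show ?thesis using 5 tm Pinv_As by (auto simp: SS_def s5_def m4_def)
  qed
qed

lemma exists_traj: "\<exists>T s th b. T > 0 \<and> geod_traj r T s th b \<and> s 0 = M/4 \<and> b 0 = arccos (c / rmin) \<and>
   (\<forall>t\<in>{0..T}. 0 < s t \<and> s t < M/2) \<and> s T = M/4 \<and> b T = arccos (c / rmin) \<and>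
   (\<forall>t\<in>{0<..<T}. \<not> (s t = M/4 \<and> sin (b t) > 0)) \<and>
   th T - th 0 = 2 * integral {pi/2..M/2-pi/2} (hfun r c) + 2 * pi"
  apply (rule exI[of _ TT], rule exI[of _ SS], rule exI[of _ THH], rule exI[of _ BB])
  using times full SS_0 BB_0 SS_T BB_T SS_range first_return THH_diff
  by (auto simp: geod_traj_iff)

end


lemma sq_lt1: fixes c R :: real assumes "\<bar>c\<bar> < R" shows "(c / R)\<^sup>2 < 1"
proof -
  have R: "0 < R" using assms by linarith
  have "\<bar>c / R\<bar> = \<bar>c\<bar> / R" using R by (simp add: abs_divide)
  also have "\<dots> < 1" using assms R by (simp add: divide_less_eq)
  finally show ?thesis by (simp add: abs_square_less_1)
qed

definition "Gf r M c = integral {pi/2..M/2-pi/2} (hfun r c)"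

lemma g_mono:
  fixes R c1 c2 :: real
  assumes R: "0 < R" and a: "0 \<le> c1" "c1 < c2" "c2 < R"
  shows "c1 / sqrt (1 - (c1/R)\<^sup>2) < c2 / sqrt (1 - (c2/R)\<^sup>2)"
proof -
  have q1: "(c1/R)\<^sup>2 < (c2/R)\<^sup>2" using a R by (intro power_strict_mono) (auto simp: divide_strict_right_mono)
  have q2: "(c2/R)\<^sup>2 < 1" using a R by (intro sq_lt1) auto
  have s2: "0 < sqrt (1 - (c2/R)\<^sup>2)" using q2 by simp
  have s12: "sqrt (1 - (c2/R)\<^sup>2) \<le> sqrt (1 - (c1/R)\<^sup>2)" using q1 by simp
  have s1: "0 < sqrt (1 - (c1/R)\<^sup>2)" using q1 q2 by simp
  have "c1 / sqrt (1 - (c1/R)\<^sup>2) \<le> c1 / sqrt (1 - (c2/R)\<^sup>2)"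
    using a s2 s12 s1 by (intro divide_left_mono) auto
  also have "\<dots> < c2 / sqrt (1 - (c2/R)\<^sup>2)" using a s2 by (simp add: divide_strict_right_mono)
  finally show ?thesis .
qed

lemma g_mono2:
  fixes R c1 c2 :: real
  assumes R: "0 < R" and a: "- R < c1" "c1 < c2" "c2 < R"
  shows "c1 / sqrt (1 - (c1/R)\<^sup>2) < c2 / sqrt (1 - (c2/R)\<^sup>2)"
proof -
  have sq: "0 < sqrt (1 - (c/R)\<^sup>2)" if "- R < c" "c < R" for c
  proof -
    have "(c/R)\<^sup>2 < 1" using that R by (intro sq_lt1) auto
    then show ?thesis by simp
  qed
  consider "0 \<le> c1" | "c1 < 0" "0 < c2" | "c2 \<le> 0" by linarith
  then show ?thesis
  proof cases
    case 1 show ?thesis by (rule g_mono[OF R 1 a(2,3)])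
  next
    case 2
    have "c1 / sqrt (1 - (c1/R)\<^sup>2) < 0" using 2 sq[OF a(1)] a by (simp add: divide_neg_pos)
    moreover have "0 < c2 / sqrt (1 - (c2/R)\<^sup>2)" using 2 sq[of c2] a by simp
    ultimately show ?thesis by linarith
  next
    case 3
    have "(- c2) / sqrt (1 - (- c2/R)\<^sup>2) < (- c1) / sqrt (1 - (- c1/R)\<^sup>2)"
      using g_mono[OF R, of "- c2" "- c1"] 3 a by simp
    then show ?thesis by (simp add: power2_eq_square)
  qed
qed

lemma hfun_mono:
  fixes R c1 c2 :: real
  assumes R: "0 < r x" and a: "- r x < c1" "c1 < c2" "c2 < r x"
  shows "hfun r c1 x < hfun r c2 x"
proof -
  have e: "hfun r c x = (c / sqrt (1 - (c/r x)\<^sup>2)) / (r x)\<^sup>2" for c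
    by (simp add: hfun_def mult.commute)
  have "0 < (r x)\<^sup>2" using R by simp
  then show ?thesis unfolding e by (rule divide_strict_right_mono[OF g_mono2[OF R a]])
qed

lemma hfun_neg: "hfun r (- c) x = - hfun r c x" by (simp add: hfun_def power2_eq_square)

context ms begin

lemma G_mono: assumes "- rmin < c1" "c1 < c2" "c2 < rmin" shows "Gf r M c1 < Gf r M c2"
proof -
  have cont: "continuous_on {pi/2..M/2-pi/2} (hfun r c)" if "- rmin < c" "c < rmin" for c
  proof -
    have nz: "r x \<noteq> 0" "sqrt (1 - (c / r x)\<^sup>2) \<noteq> 0" if "x \<in> {pi/2..M/2-pi/2}" for x
    proof -
      have R: "rmin \<le> r x" using r_ge_rmin that by blast
      then show "r x \<noteq> 0" using rmin by auto
      have "(c / r x)\<^sup>2 < 1" using R \<open>- rmin < c\<close> \<open>c < rmin\<close> rmin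
        by (intro sq_lt1) auto
      then show "sqrt (1 - (c / r x)\<^sup>2) \<noteq> 0" by simp
    qed
    show ?thesis unfolding hfun_def by (intro continuous_intros r_cont) (use nz in auto)
  qed
  show ?thesis unfolding Gf_def
  proof (rule integral_less_real)
    show "continuous_on {pi/2..M/2-pi/2} (hfun r c1)" using cont assms by auto
    show "continuous_on {pi/2..M/2-pi/2} (hfun r c2)" using cont assms by auto
    show "{pi/2<..<M/2-pi/2} \<noteq> {}" using M_gt by auto
    fix x assume x: "x \<in> {pi/2<..<M/2-pi/2}"
    have R: "rmin \<le> r x" using r_ge_rmin x by auto
    show "hfun r c1 x < hfun r c2 x" by (rule hfun_mono) (use R rmin assms in auto)
  qed
qed

lemma G_cont: "continuous_on {-rmin<..<rmin} (Gf r M)"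
proof -
  have nz: "r (snd p) \<noteq> 0" "sqrt (1 - (fst p / r (snd p))\<^sup>2) \<noteq> 0"
    if "p \<in> {-rmin<..<rmin} \<times> cbox (pi/2) (M/2-pi/2)" for p
  proof -
    have R: "rmin \<le> r (snd p)" using r_ge_rmin that by auto
    then show "r (snd p) \<noteq> 0" using rmin by auto
    have "(fst p / r (snd p))\<^sup>2 < 1" using R that rmin
      by (intro sq_lt1) auto
    then show "sqrt (1 - (fst p / r (snd p))\<^sup>2) \<noteq> 0" by simp
  qed
  have rc: "continuous_on S (\<lambda>p. r (snd p))" for S :: "(real \<times> real) set"
    by (rule continuous_on_compose2[OF r_cont[of UNIV] continuous_on_snd]) auto
  have "continuous_on ({-rmin<..<rmin} \<times> cbox (pi/2) (M/2-pi/2)) (\<lambda>(c, x). hfun r c x)"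
    unfolding hfun_def case_prod_beta by (intro continuous_intros rc) (use nz in auto)
  then have "continuous_on {-rmin<..<rmin} (\<lambda>c. integral (cbox (pi/2) (M/2-pi/2)) (hfun r c))"
    by (rule integral_continuous_on_param)
  then show ?thesis by (simp add: Gf_def[abs_def])
qed

lemma G_0: "Gf r M 0 = 0"
proof -
  have "hfun r 0 = (\<lambda>x. 0)" by (rule ext) (simp add: hfun_def)
  then show ?thesis by (simp add: Gf_def)
qed

lemma G_odd: "Gf r M (- c) = - Gf r M c"
proof -
  have "hfun r (- c) = (\<lambda>x. - hfun r c x)" by (rule ext) (simp add: hfun_neg)
  then show ?thesis by (simp add: Gf_def)
qed

end


context ms begin

lemma neck_inst: "0 < c \<Longrightarrow> c < rmin \<Longrightarrow> neck r z M rmin c"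
  by (intro neck.intro ms_axioms neck_axioms.intro)

lemma cong_neg:
  assumes rf: "rotation_function r M rmin f" and e: "\<eta> \<in> {-1<..<0}"
  shows "\<exists>k::int. f \<eta> = 2 * rmin * Gf r M (- rmin * \<eta>) + of_int k * (2 * pi * rmin)"
proof -
  define c where "c = - rmin * \<eta>"
  have ee: "0 < - \<eta>" "- \<eta> < 1" using e by auto
  have c: "0 < c" "c < rmin"
  proof -
    show "0 < c" using ee rmin mult_pos_neg[of rmin \<eta>] by (simp add: c_def)
    have "rmin * (- \<eta>) < rmin * 1" using ee rmin by (intro mult_strict_left_mono) auto
    then show "c < rmin" by (simp add: c_def)
  qed
  interpret N: neck r z M rmin c by (rule neck_inst[OF c])
  obtain T s th b where T: "T > 0" "geod_traj r T s th b" "s 0 = M/4" "b 0 = arccos (c / rmin)"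
    "\<forall>t\<in>{0..T}. 0 < s t \<and> s t < M/2" "s T = M/4" "b T = arccos (c / rmin)"
    "\<forall>t\<in>{0<..<T}. \<not> (s t = M/4 \<and> sin (b t) > 0)"
    "th T - th 0 = 2 * integral {pi/2..M/2-pi/2} (hfun r c) + 2 * pi"
    using N.exists_traj by blast
  define u where "u = c / rmin"
  have u: "0 < u" "u < 1" using c rmin by (auto simp: u_def)
  have sb: "sin (arccos u) > 0" using arccos_lt_bounded[of u] u by (intro sin_gt_zero) auto
  have cb: "- cos (arccos u) = \<eta>" using u rmin by (simp add: u_def c_def)
  have "\<exists>k::int. f \<eta> = rmin * (th T - th 0) + of_int k * (2 * pi * rmin)"
    using rf[unfolded rotation_function_def, THEN conjunct2, THEN conjunct2, rule_format, of \<eta> T s th b]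
      e T sb cb unfolding u_def by auto
  then obtain k :: int where k: "f \<eta> = rmin * (th T - th 0) + of_int k * (2 * pi * rmin)" by blast
  show ?thesis
  proof (intro exI[of _ "k + 1"])
    have "f \<eta> = rmin * (2 * integral {pi/2..M/2-pi/2} (hfun r c) + 2 * pi) + of_int k * (2 * pi * rmin)"
      using k T(9) by simp
    then show "f \<eta> = 2 * rmin * Gf r M (- rmin * \<eta>) + of_int (k + 1) * (2 * pi * rmin)"
      by (simp add: Gf_def c_def algebra_simps)
  qed
qed

lemma cong_pos:
  assumes rf: "rotation_function r M rmin f" and e: "\<eta> \<in> {0<..<1}"
  shows "\<exists>k::int. f \<eta> = 2 * rmin * Gf r M (- rmin * \<eta>) + of_int k * (2 * pi * rmin)"
proof -
  define c where "c = rmin * \<eta>"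
  have c: "0 < c" "c < rmin"
  proof -
    show "0 < c" using e rmin by (simp add: c_def)
    have "rmin * \<eta> < rmin * 1" using e rmin by (intro mult_strict_left_mono) auto
    then show "c < rmin" by (simp add: c_def)
  qed
  interpret N: neck r z M rmin c by (rule neck_inst[OF c])
  obtain T s th b where T: "T > 0" "geod_traj r T s th b" "s 0 = M/4" "b 0 = arccos (c / rmin)"
    "\<forall>t\<in>{0..T}. 0 < s t \<and> s t < M/2" "s T = M/4" "b T = arccos (c / rmin)"
    "\<forall>t\<in>{0<..<T}. \<not> (s t = M/4 \<and> sin (b t) > 0)"
    "th T - th 0 = 2 * integral {pi/2..M/2-pi/2} (hfun r c) + 2 * pi"
    using N.exists_traj by blast
  have fl: "geod_traj r T s (\<lambda>t. - th t) (\<lambda>t. pi - b t)"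
    using flip T(2) unfolding geod_traj_iff by blast
  define u where "u = c / rmin"
  have u: "0 < u" "u < 1" using c rmin by (auto simp: u_def)
  have sb: "sin (pi - arccos u) > 0" using arccos_lt_bounded[of u] u by (simp, intro sin_gt_zero) auto
  have cb: "- cos (pi - arccos u) = \<eta>" using u rmin by (simp add: u_def c_def)
  have fr: "\<forall>t\<in>{0<..<T}. \<not> (s t = M/4 \<and> sin (pi - b t) > 0)" using T(8) by simp
  have "\<exists>k::int. f \<eta> = rmin * (- th T - - th 0) + of_int k * (2 * pi * rmin)"
    using rf[unfolded rotation_function_def, THEN conjunct2, THEN conjunct2, rule_format, of \<eta> T s "\<lambda>t. - th t" "\<lambda>t. pi - b t"]
      e T fl sb cb fr unfolding u_def by auto
  then obtain k :: int where k: "f \<eta> = rmin * (- th T - - th 0) + of_int k * (2 * pi * rmin)" by blast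
  have G: "Gf r M (- rmin * \<eta>) = - Gf r M c" using G_odd[of c] by (simp add: c_def)
  show ?thesis
  proof (intro exI[of _ "k - 1"])
    have "f \<eta> = - rmin * (2 * integral {pi/2..M/2-pi/2} (hfun r c) + 2 * pi) + of_int k * (2 * pi * rmin)"
      using k T(9) by (simp add: algebra_simps)
    then show "f \<eta> = 2 * rmin * Gf r M (- rmin * \<eta>) + of_int (k - 1) * (2 * pi * rmin)"
      unfolding G by (simp add: Gf_def algebra_simps)
  qed
qed

end

theorem mainTheorem2:
  fixes r z :: "real \<Rightarrow> real" and M rmin :: real and f :: "real \<Rightarrow> real"
  assumes "model_sphere r z M rmin"
    and "rotation_function r M rmin f"
  shows "\<forall>x\<in>{-1<..<1}. \<forall>y\<in>{-1<..<1}. x < y \<longrightarrow> f y < f x"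
proof -
  interpret ms r z M rmin by (rule ms.intro) (rule assms(1))
  define S where "S = {-1<..<1::real}"
  define F where "F = (\<lambda>\<eta>. 2 * rmin * Gf r M (- rmin * \<eta>))"
  define L where "L = 2 * pi * rmin"
  have L: "0 < L" using rmin by (simp add: L_def)
  define h where "h = (\<lambda>\<eta>. (f \<eta> - F \<eta>) / L)"
  have F0: "F 0 = 0" by (simp add: F_def G_0)
  have f0: "f 0 = 0" using assms(2) by (simp add: rotation_function_def)
  have hint: "h \<eta> \<in> \<int>" if "\<eta> \<in> S" for \<eta>
  proof -
    have b: "-1 < \<eta>" "\<eta> < 1" using that by (auto simp: S_def)
    consider "\<eta> \<in> {-1<..<0}" | "\<eta> = 0" | "\<eta> \<in> {0<..<1}"
      using b by (cases \<eta> "0::real" rule: linorder_cases) auto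
    then show ?thesis
    proof cases
      case 2 then show ?thesis by (simp add: h_def F0 f0)
    next
      case 1
      then obtain k :: int where "f \<eta> = F \<eta> + of_int k * L"
        using cong_neg[OF assms(2)] by (auto simp: F_def L_def)
      then show ?thesis using L by (simp add: h_def)
    next
      case 3
      then obtain k :: int where "f \<eta> = F \<eta> + of_int k * L"
        using cong_pos[OF assms(2)] by (auto simp: F_def L_def)
      then show ?thesis using L by (simp add: h_def)
    qed
  qed
  have img: "(\<lambda>\<eta>. - rmin * \<eta>) ` S \<subseteq> {-rmin<..<rmin}"
  proof
    fix y assume "y \<in> (\<lambda>\<eta>. - rmin * \<eta>) ` S"
    then obtain x where x: "-1 < x" "x < 1" "y = - rmin * x" by (auto simp: S_def)
    have "rmin * (- x) < rmin * 1" "rmin * x < rmin * 1" using x rmin by (intro mult_strict_left_mono; simp)+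
    then show "y \<in> {-rmin<..<rmin}" using x by auto
  qed
  have Fc: "continuous_on S F"
  proof -
    have "continuous_on S (\<lambda>\<eta>. Gf r M (- rmin * \<eta>))"
      by (rule continuous_on_compose2[OF G_cont _ img]) (intro continuous_intros)
    then show ?thesis unfolding F_def by (intro continuous_intros)
  qed
  have fc: "continuous_on S f" using assms(2) by (simp add: rotation_function_def S_def)
  have hc: "continuous_on S h" unfolding h_def by (intro continuous_intros fc Fc) (use L in auto)
  have conn: "connected S" unfolding S_def by (simp add: is_interval_connected_1[symmetric] is_interval_def)
  have "h constant_on S"
  proof (rule continuous_discrete_range_constant[OF conn hc])
    fix x assume x: "x \<in> S"
    show "\<exists>e>0. \<forall>y. y \<in> S \<and> h y \<noteq> h x \<longrightarrow> e \<le> norm (h y - h x)"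
    proof (intro exI[of _ 1] conjI allI impI)
      fix y assume y: "y \<in> S \<and> h y \<noteq> h x"
      have "h y - h x \<in> \<int>" using hint x y by (intro Ints_diff) auto
      moreover have "h y - h x \<noteq> 0" using y by simp
      ultimately show "1 \<le> norm (h y - h x)" using Ints_nonzero_abs_ge1 by (simp only: real_norm_def)
    qed simp
  qed
  then obtain a where a: "\<forall>x\<in>S. h x = a" unfolding constant_on_def by blast
  have "0 \<in> S" by (simp add: S_def)
  then have "h 0 = a" using a by blast
  moreover have "h 0 = 0" by (simp add: h_def F0 f0)
  ultimately have a0: "a = 0" by simp
  have fF: "f x = F x" if "x \<in> S" for x using a a0 that L by (auto simp: h_def)
  show ?thesis
  proof (intro ballI impI)
    fix x y :: real assume x: "x \<in> {-1<..<1}" and y: "y \<in> {-1<..<1}" and xy: "x < y"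
    have "Gf r M (- rmin * y) < Gf r M (- rmin * x)"
    proof (rule G_mono)
      have ix: "- rmin * x \<in> {-rmin<..<rmin}" "- rmin * y \<in> {-rmin<..<rmin}"
        using img x y unfolding S_def by blast+
      then show "- rmin < - rmin * y" "- rmin * x < rmin" by auto
      show "- rmin * y < - rmin * x" using xy rmin by simp
    qed
    then have "F y < F x" using rmin by (simp add: F_def)
    then show "f y < f x" using fF x y by (simp add: S_def)
  qed
qed


end
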